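(* Let $V=\{(x_1,x_2,y_1,y_2)\in\mathbb{R}^4: X\neq0,\ Y\neq 0\}$. For every choice of polynomials $P_1,\dots,P_4\in\mathbb{Q}[x_1,x_2,y_1,y_2]$ and every variable $\xi\in\{x_1,x_2,y_1,y_2\}$ there exist polynomials $Q_1,\dots,Q_4\in\mathbb{Q}[x_1,x_2,y_1,y_2]$ such that $\frac{\partial}{\partial\xi}H_{Q_1,\dots,Q_4}=H_{P_1,\dots,P_4}$ on $V$.
   Context: For $(x_1,x_2,y_1,y_2)\in\mathbb{R}^4$ set $X=x_1-y_1$ and $Y=x_2-y_2$. For polynomials $P_1,\dots,P_4$ define on $V$ $$H_{P_1,\dots,P_4}=P_1\ln(X^2+Y^2)+P_2\arctan\!\Big(\frac XY\Big)+P_3\arctan\!\Big(\frac YX\Big)+P_4.$$ *)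

theory Defs
  imports "HOL-Analysis.Analysis"
begin

text \<open>A polynomial in
  Q[x1,x2,y1,y2] is represented by its coefficient function on exponent
  tuples (a,b,c,d) (monomial x1^a x2^b y1^c y2^d), required to have finite support.\<close>

type_synonym pt4 = "real \<times> real \<times> real \<times> real"
type_synonym qpoly4 = "nat \<times> nat \<times> nat \<times> nat \<Rightarrow> rat"

definition is_qpoly4 :: "qpoly4 \<Rightarrow> bool" where
  "is_qpoly4 c \<longleftrightarrow> finite {m. c m \<noteq> 0}"

definition peval4 :: "qpoly4 \<Rightarrow> pt4 \<Rightarrow> real" where
  "peval4 c p = (case p of (x1, x2, y1, y2) \<Rightarrow>
     (\<Sum>m\<in>{m. c m \<noteq> 0}. case m of (a, b, e, d) \<Rightarrow>
        real_of_rat (c m) * x1 ^ a * x2 ^ b * y1 ^ e * y2 ^ d))"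

definition bigX :: "pt4 \<Rightarrow> real" where
  "bigX p = (case p of (x1, x2, y1, y2) \<Rightarrow> x1 - y1)"

definition bigY :: "pt4 \<Rightarrow> real" where
  "bigY p = (case p of (x1, x2, y1, y2) \<Rightarrow> x2 - y2)"

definition setV :: "pt4 set" where
  "setV = {p. bigX p \<noteq> 0 \<and> bigY p \<noteq> 0}"

definition Hfun :: "qpoly4 \<Rightarrow> qpoly4 \<Rightarrow> qpoly4 \<Rightarrow> qpoly4 \<Rightarrow> pt4 \<Rightarrow> real" where
  "Hfun P1 P2 P3 P4 p =
     peval4 P1 p * ln ((bigX p)\<^sup>2 + (bigY p)\<^sup>2)
   + peval4 P2 p * arctan (bigX p / bigY p)
   + peval4 P3 p * arctan (bigY p / bigX p)
   + peval4 P4 p"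

definition coord :: "nat \<Rightarrow> pt4 \<Rightarrow> real" where
  "coord k p = (case p of (x1, x2, y1, y2) \<Rightarrow>
     (if k = 0 then x1 else if k = 1 then x2 else if k = 2 then y1 else y2))"

definition setc :: "nat \<Rightarrow> real \<Rightarrow> pt4 \<Rightarrow> pt4" where
  "setc k t p = (case p of (x1, x2, y1, y2) \<Rightarrow>
     (if k = 0 then (t, x2, y1, y2) else if k = 1 then (x1, t, y1, y2)
      else if k = 2 then (x1, x2, t, y2) else (x1, x2, y1, t)))"

end

theory Submission
  imports Defs
begin

definition mon4 :: "nat\<times>nat\<times>nat\<times>nat \<Rightarrow> pt4 \<Rightarrow> real" where
 "mon4 m p = coord 0 p ^ fst m * coord 1 p ^ fst (snd m) * coord 2 p ^ fst (snd (snd m)) * coord 3 p ^ snd (snd (snd m))"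

definition SF :: "(pt4 \<Rightarrow> real) \<Rightarrow> bool" where
 "SF f \<longleftrightarrow> (\<exists>S r. finite S \<and> f = (\<lambda>p. \<Sum>m\<in>S. real_of_rat (r m) * mon4 m p))"

definition madd :: "nat\<times>nat\<times>nat\<times>nat \<Rightarrow> nat\<times>nat\<times>nat\<times>nat \<Rightarrow> nat\<times>nat\<times>nat\<times>nat" where
 "madd m n = (fst m + fst n, fst (snd m) + fst (snd n), fst (snd (snd m)) + fst (snd (snd n)), snd (snd (snd m)) + snd (snd (snd n)))"

lemma mon4_madd: "mon4 (madd m n) p = mon4 m p * mon4 n p"
  by (simp add: mon4_def madd_def power_add mult_ac)

lemma peval4_mono: "peval4 c p = (\<Sum>m\<in>{m. c m \<noteq> 0}. real_of_rat (c m) * mon4 m p)"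
  by (cases p) (auto simp: peval4_def mon4_def coord_def split: prod.splits intro!: sum.cong)

lemma SF_peval: "is_qpoly4 c \<Longrightarrow> SF (peval4 c)"
  unfolding SF_def is_qpoly4_def by (rule exI[of _ "{m. c m \<noteq> 0}"], rule exI[of _ c]) (auto simp: peval4_mono[abs_def])

lemma SF_to_peval: assumes "SF f" shows "\<exists>c. is_qpoly4 c \<and> peval4 c = f"
proof -
  obtain S r where S: "finite S" and f: "f = (\<lambda>p. \<Sum>m\<in>S. real_of_rat (r m) * mon4 m p)"
    using assms(1) unfolding SF_def by blast
  define c where "c = (\<lambda>n. if n \<in> S then r n else 0)"
  have sub: "{m. c m \<noteq> 0} \<subseteq> S" unfolding c_def by auto
  have "is_qpoly4 c" unfolding is_qpoly4_def using sub S finite_subset by blast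
  moreover have "peval4 c = f"
  proof (rule ext)
    fix p show "peval4 c p = f p"
  proof -
    have "peval4 c p = (\<Sum>m\<in>S. real_of_rat (c m) * mon4 m p)"
      unfolding peval4_mono by (rule sum.mono_neutral_left[OF S sub]) auto
    also have "\<dots> = f p" unfolding f c_def by (auto intro!: sum.cong)
    finally show ?thesis .
  qed
  qed
  ultimately show ?thesis by blast
qed

lemma SF_const: "SF (\<lambda>p. real_of_rat r)"
  unfolding SF_def by (rule exI[of _ "{(0,0,0,0)}"], rule exI[of _ "\<lambda>_. r"]) (auto simp: mon4_def)

lemma SF_mon: "SF (mon4 m)"
  unfolding SF_def by (rule exI[of _ "{m}"], rule exI[of _ "\<lambda>_. 1"]) simp

lemma SF_coord: "i < 4 \<Longrightarrow> SF (\<lambda>p. coord i p)"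
proof -
  assume "i < 4"
  then have i: "i=0 \<or> i=1 \<or> i=2 \<or> i=3" by auto
  have "mon4 (1,0,0,0) = coord 0" "mon4 (0,1,0,0) = coord 1" "mon4 (0,0,1,0) = coord 2" "mon4 (0,0,0,1) = coord 3"
    by (rule ext, simp add: mon4_def)+
  then have "SF (coord 0)" "SF (coord 1)" "SF (coord 2)" "SF (coord 3)" using SF_mon by metis+
  then show ?thesis using i by (elim disjE) simp_all
qed

lemma sum_restrict_if: "finite A \<Longrightarrow> S \<subseteq> A \<Longrightarrow> (\<Sum>n\<in>A. (if n \<in> S then g n else 0)) = (\<Sum>n\<in>S. g n)"
  using sum.inter_restrict[of A g S] by (simp add: Int_absorb1)

lemma SF_add: assumes "SF f" "SF g" shows "SF (\<lambda>p. f p + g p)"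
proof -
  obtain S r where S: "finite S" and f: "f = (\<lambda>p. \<Sum>m\<in>S. real_of_rat (r m) * mon4 m p)"
    using assms(1) unfolding SF_def by blast
  obtain T s where T: "finite T" and g: "g = (\<lambda>p. \<Sum>m\<in>T. real_of_rat (s m) * mon4 m p)"
    using assms(2) unfolding SF_def by blast
  define t where "t = (\<lambda>n. (if n\<in>S then r n else 0) + (if n \<in> T then s n else 0))"
  have "(\<lambda>p. f p + g p) = (\<lambda>p. \<Sum>m\<in>S\<union>T. real_of_rat (t m) * mon4 m p)"
  proof
    fix p
    have "(\<Sum>m\<in>S\<union>T. real_of_rat (t m) * mon4 m p) =
      (\<Sum>m\<in>S\<union>T. (if m\<in>S then real_of_rat (r m) * mon4 m p else 0)) + (\<Sum>m\<in>S\<union>T. (if m\<in>T then real_of_rat (s m) * mon4 m p else 0))"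
      unfolding t_def sum.distrib[symmetric] by (rule sum.cong) (auto simp: of_rat_add distrib_right)
    also have "\<dots> = f p + g p" unfolding f g using S T by (simp add: sum_restrict_if)
    finally show "f p + g p = (\<Sum>m\<in>S\<union>T. real_of_rat (t m) * mon4 m p)" by simp
  qed
  thus ?thesis unfolding SF_def using S T by (intro exI[of _ "S \<union> T"] exI[of _ t] conjI) auto
qed

lemma SF_mult: assumes "SF f" "SF g" shows "SF (\<lambda>p. f p * g p)"
proof -
  obtain S r where S: "finite S" and f: "f = (\<lambda>p. \<Sum>m\<in>S. real_of_rat (r m) * mon4 m p)"
    using assms(1) unfolding SF_def by blast
  obtain T s where T: "finite T" and g: "g = (\<lambda>p. \<Sum>m\<in>T. real_of_rat (s m) * mon4 m p)"
    using assms(2) unfolding SF_def by blast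
  define h where "h = (\<lambda>x. madd (fst x) (snd x))"
  define t where "t = (\<lambda>y. \<Sum>x\<in>{x\<in>S\<times>T. h x = y}. r (fst x) * s (snd x))"
  have fin: "finite (S \<times> T)" using S T by simp
  have "(\<lambda>p. f p * g p) = (\<lambda>p. \<Sum>m\<in>h ` (S\<times>T). real_of_rat (t m) * mon4 m p)"
  proof
    fix p
    have "f p * g p = (\<Sum>x\<in>S\<times>T. real_of_rat (r (fst x) * s (snd x)) * mon4 (h x) p)"
      unfolding f g h_def sum_product sum.cartesian_product mon4_madd
      by (simp add: of_rat_mult mult_ac case_prod_beta)
    also have "\<dots> = (\<Sum>y\<in>h ` (S\<times>T). \<Sum>x\<in>{x\<in>S\<times>T. h x = y}. real_of_rat (r (fst x) * s (snd x)) * mon4 (h x) p)"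
      by (rule sum.image_gen[OF fin])
    also have "\<dots> = (\<Sum>y\<in>h ` (S\<times>T). real_of_rat (t y) * mon4 y p)"
      unfolding t_def of_rat_sum sum_distrib_right by (auto intro!: sum.cong)
    finally show "f p * g p = (\<Sum>m\<in>h ` (S\<times>T). real_of_rat (t m) * mon4 m p)" .
  qed
  thus ?thesis unfolding SF_def using fin by (intro exI[of _ "h ` (S \<times> T)"] exI[of _ t] conjI) auto
qed

lemma SF_pow: "SF f \<Longrightarrow> SF (\<lambda>p. f p ^ n)"
proof (induction n)
  case 0 then show ?case using SF_const[of 1] by simp
next
  case (Suc n) then show ?case using SF_mult[of f "\<lambda>p. f p ^ n"] by simp
qed

lemma SF_ofnat: "SF (\<lambda>p. real n)"
  using SF_const[of "of_nat n"] by simp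

lemma SF_neg: "SF f \<Longrightarrow> SF (\<lambda>p. - f p)"
  using SF_mult[OF SF_const[of "-1"], of f] by simp

lemma SF_diff: "SF f \<Longrightarrow> SF g \<Longrightarrow> SF (\<lambda>p. f p - g p)"
  using SF_add[of f "\<lambda>p. - g p"] SF_neg[of g] by simp

lemma SF_sum: "finite A \<Longrightarrow> (\<And>i. i \<in> A \<Longrightarrow> SF (f i)) \<Longrightarrow> SF (\<lambda>p. \<Sum>i\<in>A. f i p)"
proof (induction A rule: finite_induct)
  case empty then show ?case using SF_const[of 0] by simp
next
  case (insert x F) then show ?case using SF_add[of "f x" "\<lambda>p. \<Sum>i\<in>F. f i p"] by simp
qed

lemma pos2: "u \<noteq> 0 \<or> w \<noteq> 0 \<Longrightarrow> u\<^sup>2+w\<^sup>2 \<noteq> (0::real)"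
  by (simp add: sum_power2_eq_zero_iff)

lemma alg1: "(w::real) \<noteq> 0 \<Longrightarrow> inverse (1 + (u/w)\<^sup>2) * (1/w) = w/(u\<^sup>2+w\<^sup>2)"
proof -
  assume w: "w \<noteq> 0"
  have p: "u\<^sup>2+w\<^sup>2 \<noteq> 0" using w pos2 by blast
  have "1 + (u/w)\<^sup>2 = (u\<^sup>2+w\<^sup>2)/w\<^sup>2" using w by (simp add: add_divide_distrib power_divide)
  then show ?thesis using w p by (simp add: field_simps power2_eq_square)
qed

lemma alg2: "(u::real) \<noteq> 0 \<Longrightarrow> inverse (1 + (w/u)\<^sup>2) * (- w / u\<^sup>2) = - w/(u\<^sup>2+w\<^sup>2)"
proof -
  assume w: "u \<noteq> 0"
  have p: "u\<^sup>2+w\<^sup>2 \<noteq> 0" using w pos2 by blast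
  have "1 + (w/u)\<^sup>2 = (u\<^sup>2+w\<^sup>2)/u\<^sup>2" using w by (simp add: add_divide_distrib power_divide)
  then show ?thesis using w p by (simp add: field_simps power2_eq_square)
qed

lemma d_shift: "((\<lambda>t. u + (t - t0)) has_real_derivative 1) (at t0)"
  by (auto intro!: derivative_eq_intros)

lemma d_A1: "w \<noteq> 0 \<Longrightarrow> ((\<lambda>t. arctan ((u + (t - t0)) / w)) has_real_derivative w/(u\<^sup>2+w\<^sup>2)) (at t0)"
proof -
  assume w: "w \<noteq> 0"
  have g: "((\<lambda>t. (u + (t - t0))/w) has_real_derivative 1/w) (at t0)"
    using DERIV_cdivide[OF d_shift[of u t0], of w] by simp
  show ?thesis using DERIV_chain2[OF DERIV_arctan g] alg1[OF w] by simp
qed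

lemma d_A2: "u \<noteq> 0 \<Longrightarrow> ((\<lambda>t. arctan (w / (u + (t - t0)))) has_real_derivative - w/(u\<^sup>2+w\<^sup>2)) (at t0)"
proof -
  assume u: "u \<noteq> 0"
  have g: "((\<lambda>t. w / (u + (t - t0))) has_real_derivative - w / u\<^sup>2) (at t0)"
    using DERIV_divide[OF DERIV_const d_shift[of u t0], of w] u by (simp add: power2_eq_square)
  show ?thesis using DERIV_chain2[OF DERIV_arctan g] alg2[OF u] by simp
qed

lemma d_L: "w \<noteq> 0 \<Longrightarrow> ((\<lambda>t. ln ((u + (t - t0))\<^sup>2 + w\<^sup>2)) has_real_derivative 2*u/(u\<^sup>2+w\<^sup>2)) (at t0)"
proof -
  assume w: "w \<noteq> 0"
  have p: "u\<^sup>2+w\<^sup>2 > 0" using w by (simp add: sum_power2_gt_zero_iff)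
  have g: "((\<lambda>t. (u + (t - t0))\<^sup>2 + w\<^sup>2) has_real_derivative 2*u) (at t0)"
    by (auto intro!: derivative_eq_intros)
  have "((\<lambda>t. ln ((u + (t - t0))\<^sup>2 + w\<^sup>2)) has_real_derivative inverse (u\<^sup>2+w\<^sup>2) * (2*u)) (at t0)"
    using DERIV_chain2[OF DERIV_ln g] p by simp
  then show ?thesis by (simp add: divide_inverse mult.commute)
qed

lemma d_P: "((\<lambda>t. (u + (t - t0)) ^ Suc n) has_real_derivative real (Suc n) * u ^ n) (at t0)"
  using DERIV_pow[of "Suc n" "u" ] DERIV_chain2[OF _ d_shift[of u t0], of "\<lambda>x. x ^ Suc n"] by simp

lemma SF_zero: "SF (\<lambda>p. 0)" using SF_const[of 0] by simp
lemma SF_one: "SF (\<lambda>p. 1)" using SF_const[of 1] by simp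

definition LL :: "pt4 \<Rightarrow> real" where "LL p = ln ((bigX p)\<^sup>2 + (bigY p)\<^sup>2)"
definition A1 :: "pt4 \<Rightarrow> real" where "A1 p = arctan (bigX p / bigY p)"
definition A2 :: "pt4 \<Rightarrow> real" where "A2 p = arctan (bigY p / bigX p)"

definition HC :: "(pt4 \<Rightarrow> real) \<Rightarrow> bool" where
 "HC g \<longleftrightarrow> (\<exists>a b c d. SF a \<and> SF b \<and> SF c \<and> SF d \<and> g = (\<lambda>p. a p * LL p + b p * A1 p + c p * A2 p + d p))"

lemma HC_add: assumes "HC f" "HC g" shows "HC (\<lambda>p. f p + g p)"
proof -
  obtain a b c d where f: "SF a" "SF b" "SF c" "SF d" "f = (\<lambda>p. a p * LL p + b p * A1 p + c p * A2 p + d p)"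
    using assms(1) unfolding HC_def by blast
  obtain a' b' c' d' where g: "SF a'" "SF b'" "SF c'" "SF d'" "g = (\<lambda>p. a' p * LL p + b' p * A1 p + c' p * A2 p + d' p)"
    using assms(2) unfolding HC_def by blast
  show ?thesis unfolding HC_def
    apply (rule exI[of _ "\<lambda>p. a p + a' p"], rule exI[of _ "\<lambda>p. b p + b' p"], rule exI[of _ "\<lambda>p. c p + c' p"], rule exI[of _ "\<lambda>p. d p + d' p"])
    using f g by (auto intro!: SF_add simp: algebra_simps)
qed

lemma HC_mult: assumes "SF h" "HC g" shows "HC (\<lambda>p. h p * g p)"
proof -
  obtain a b c d where g: "SF a" "SF b" "SF c" "SF d" "g = (\<lambda>p. a p * LL p + b p * A1 p + c p * A2 p + d p)"
    using assms(2) unfolding HC_def by blast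
  show ?thesis unfolding HC_def
    apply (rule exI[of _ "\<lambda>p. h p * a p"], rule exI[of _ "\<lambda>p. h p * b p"], rule exI[of _ "\<lambda>p. h p * c p"], rule exI[of _ "\<lambda>p. h p * d p"])
    using g assms(1) by (auto intro!: SF_mult simp: algebra_simps)
qed

lemma HC_SF: "SF d \<Longrightarrow> HC d"
  unfolding HC_def using SF_zero by fastforce

lemma HC_LL: "HC LL"
  unfolding HC_def apply (rule exI[of _ "\<lambda>p. 1"], rule exI[of _ "\<lambda>p. 0"], rule exI[of _ "\<lambda>p. 0"], rule exI[of _ "\<lambda>p. 0"])
  using SF_zero SF_one by auto
lemma HC_A1: "HC A1"
  unfolding HC_def apply (rule exI[of _ "\<lambda>p. 0"], rule exI[of _ "\<lambda>p. 1"], rule exI[of _ "\<lambda>p. 0"], rule exI[of _ "\<lambda>p. 0"])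
  using SF_zero SF_one by auto
lemma HC_A2: "HC A2"
  unfolding HC_def apply (rule exI[of _ "\<lambda>p. 0"], rule exI[of _ "\<lambda>p. 0"], rule exI[of _ "\<lambda>p. 1"], rule exI[of _ "\<lambda>p. 0"])
  using SF_zero SF_one by auto

lemma HC_neg: "HC g \<Longrightarrow> HC (\<lambda>p. - g p)"
  using HC_mult[OF SF_const[of "-1"]] by simp

lemma coord_setc: "k < 4 \<Longrightarrow> i < 4 \<Longrightarrow> coord i (setc k t p) = (if i = k then t else coord i p)"
  apply (cases p)
  apply (subgoal_tac "k=0 \<or> k=1 \<or> k=2 \<or> k=3")
   apply (subgoal_tac "i=0 \<or> i=1 \<or> i=2 \<or> i=3")
    apply (auto simp: coord_def setc_def)
  done

lemma bigX_coord: "bigX p = coord 0 p - coord 2 p"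
  by (cases p) (simp add: bigX_def coord_def)
lemma bigY_coord: "bigY p = coord 1 p - coord 3 p"
  by (cases p) (simp add: bigY_def coord_def)

definition indep :: "nat \<Rightarrow> (pt4 \<Rightarrow> real) \<Rightarrow> bool" where
  "indep k h \<longleftrightarrow> (\<forall>t p. h (setc k t p) = h p)"

lemma indep_const: "indep k (\<lambda>p. c)" by (simp add: indep_def)
lemma indep_mult: "indep k f \<Longrightarrow> indep k g \<Longrightarrow> indep k (\<lambda>p. f p * g p)" by (simp add: indep_def)
lemma indep_pow: "indep k f \<Longrightarrow> indep k (\<lambda>p. f p ^ n)" by (simp add: indep_def)
lemma indep_neg: "indep k f \<Longrightarrow> indep k (\<lambda>p. - f p)" by (simp add: indep_def)
lemma indep_coord: "k < 4 \<Longrightarrow> i < 4 \<Longrightarrow> i \<noteq> k \<Longrightarrow> indep k (coord i)"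
  by (simp add: indep_def coord_setc)

definition Dk :: "nat \<Rightarrow> (pt4 \<Rightarrow> real) \<Rightarrow> (pt4 \<Rightarrow> real) \<Rightarrow> bool" where
  "Dk k G f \<longleftrightarrow> (\<forall>p\<in>setV. ((\<lambda>t. G (setc k t p)) has_real_derivative f p) (at (coord k p)))"

lemma Dk_add: "Dk k F f \<Longrightarrow> Dk k G g \<Longrightarrow> Dk k (\<lambda>p. F p + G p) (\<lambda>p. f p + g p)"
  unfolding Dk_def by (auto intro!: DERIV_add)

lemma Dk_mult: "Dk k F f \<Longrightarrow> Dk k G g \<Longrightarrow> Dk k (\<lambda>p. F p * G p) (\<lambda>p. f p * G p + F p * g p)"
proof -
  assume F: "Dk k F f" and G: "Dk k G g"
  show ?thesis unfolding Dk_def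
  proof
    fix p assume p: "p \<in> setV"
    have "((\<lambda>t. F (setc k t p) * G (setc k t p)) has_real_derivative
        f p * G (setc k (coord k p) p) + g p * F (setc k (coord k p) p)) (at (coord k p))"
      using DERIV_mult[OF F[unfolded Dk_def, rule_format, OF p] G[unfolded Dk_def, rule_format, OF p]] by simp
    moreover have "setc k (coord k p) p = p"
      by (cases p) (auto simp: setc_def coord_def)
    ultimately show "((\<lambda>t. F (setc k t p) * G (setc k t p)) has_real_derivative f p * G p + F p * g p) (at (coord k p))"
      by (simp add: mult.commute)
  qed
qed

lemma Dk_indep: assumes "indep k h" shows "Dk k h (\<lambda>p. 0)"
  unfolding Dk_def
proof
  fix p
  have "(\<lambda>t. h (setc k t p)) = (\<lambda>t. h p)" using assms unfolding indep_def by blast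
  then show "((\<lambda>t. h (setc k t p)) has_real_derivative 0) (at (coord k p))" by simp
qed

lemma Dk_cong: "Dk k G f \<Longrightarrow> (\<And>p. p \<in> setV \<Longrightarrow> f p = g p) \<Longrightarrow> Dk k G g"
  unfolding Dk_def by simp

definition Ig :: "nat \<Rightarrow> (pt4 \<Rightarrow> real) \<Rightarrow> bool" where
  "Ig k f \<longleftrightarrow> (\<exists>G. HC G \<and> Dk k G f)"

lemma Ig_add: "Ig k f \<Longrightarrow> Ig k g \<Longrightarrow> Ig k (\<lambda>p. f p + g p)"
  unfolding Ig_def using HC_add Dk_add by blast

lemma Ig_mult: assumes "SF h" "indep k h" "Ig k f" shows "Ig k (\<lambda>p. h p * f p)"
proof -
  obtain G where G: "HC G" "Dk k G f" using assms(3) unfolding Ig_def by blast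
  have "Dk k (\<lambda>p. h p * G p) (\<lambda>p. 0 * G p + h p * f p)"
    by (rule Dk_mult[OF Dk_indep[OF assms(2)] G(2)])
  then have "Dk k (\<lambda>p. h p * G p) (\<lambda>p. h p * f p)" by simp
  then show ?thesis unfolding Ig_def using HC_mult[OF assms(1) G(1)] by blast
qed

lemma Ig_cong: "Ig k f \<Longrightarrow> (\<And>p. p \<in> setV \<Longrightarrow> f p = g p) \<Longrightarrow> Ig k g"
  unfolding Ig_def using Dk_cong by blast

lemma Ig_zero: "Ig k (\<lambda>p. 0)"
  unfolding Ig_def using HC_SF[OF SF_zero] Dk_indep[OF indep_const] by blast

lemma Ig_const: "Ig k f \<Longrightarrow> Ig k (\<lambda>p. real_of_rat c * f p)"
  by (rule Ig_mult[OF SF_const indep_const])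

lemma Ig_neg: "Ig k f \<Longrightarrow> Ig k (\<lambda>p. - f p)"
  using Ig_const[of k f "-1"] by simp

lemma Ig_sum: "finite A \<Longrightarrow> (\<And>i. i \<in> A \<Longrightarrow> Ig k (f i)) \<Longrightarrow> Ig k (\<lambda>p. \<Sum>i\<in>A. f i p)"
proof (induction A rule: finite_induct)
  case empty then show ?case using Ig_zero by simp
next
  case (insert x F) then show ?case using Ig_add[of k "f x" "\<lambda>p. \<Sum>i\<in>F. f i p"] by simp
qed

lemma Ig_of_Dk: "HC G \<Longrightarrow> Dk k G f \<Longrightarrow> Ig k f"
  unfolding Ig_def by blast

lemma mono_split: assumes "k < 4" shows "\<exists>j h. SF h \<and> indep k h \<and> (\<forall>p. mon4 m p = coord k p ^ j * h p)"
proof -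
  obtain a b c d where m: "m = (a,b,c,d)" by (cases m) auto
  have S: "SF (\<lambda>p. coord i p ^ n)" if "i < 4" for i n using SF_pow[OF SF_coord[OF that]] .
  have I: "indep k (\<lambda>p. coord i p ^ n)" if "i < 4" "i \<noteq> k" for i n using indep_pow[OF indep_coord[OF assms that]] .
  have "k=0 \<or> k=1 \<or> k=2 \<or> k=3" using assms by auto
  then show ?thesis
  proof (elim disjE)
    assume k: "k = 0"
    show ?thesis
      apply (rule exI[of _ a], rule exI[of _ "\<lambda>p. coord 1 p ^ b * coord 2 p ^ c * coord 3 p ^ d"])
      using S I k by (auto intro!: SF_mult indep_mult simp: mon4_def m mult_ac)
  next
    assume k: "k = 1"
    show ?thesis
      apply (rule exI[of _ b], rule exI[of _ "\<lambda>p. coord 0 p ^ a * coord 2 p ^ c * coord 3 p ^ d"])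
      using S I k by (auto intro!: SF_mult indep_mult simp: mon4_def m mult_ac)
  next
    assume k: "k = 2"
    show ?thesis
      apply (rule exI[of _ c], rule exI[of _ "\<lambda>p. coord 0 p ^ a * coord 1 p ^ b * coord 3 p ^ d"])
      using S I k by (auto intro!: SF_mult indep_mult simp: mon4_def m mult_ac)
  next
    assume k: "k = 3"
    show ?thesis
      apply (rule exI[of _ d], rule exI[of _ "\<lambda>p. coord 0 p ^ a * coord 1 p ^ b * coord 2 p ^ c"])
      using S I k by (auto intro!: SF_mult indep_mult simp: mon4_def m mult_ac)
  qed
qed

lemma alg_T: "(u::real)\<^sup>2 + w\<^sup>2 \<noteq> 0 \<Longrightarrow> u ^ m + - w * (w * u ^ m / (u\<^sup>2 + w\<^sup>2)) = u ^ Suc (Suc m) / (u\<^sup>2 + w\<^sup>2)"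
  by (simp add: field_simps power2_eq_square)

lemma alg_L: "real_of_rat (1 / of_nat (Suc n)) * (real (Suc n) * u ^ n * L + u ^ Suc n * (2 * u / D) + real_of_rat (-2) * (u ^ Suc (Suc n) / D)) = (u::real) ^ n * L"
proof -
  have "u ^ Suc n * (2 * u / D) + real_of_rat (-2) * (u ^ Suc (Suc n) / D) = 0"
    by (simp add: of_rat_minus)
  then show ?thesis by (simp add: of_rat_divide of_rat_add of_rat_of_nat_eq)
qed

lemma alg_A: "real_of_rat (1 / of_nat (Suc n)) * (real (Suc n) * u ^ n * L + u ^ Suc n * (w / D) + real_of_rat (-1) * (w * u ^ Suc n / D)) = (u::real) ^ n * L"
proof -
  have "u ^ Suc n * (w / D) + real_of_rat (-1) * (w * u ^ Suc n / D) = 0"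
    by (simp add: of_rat_minus)
  then show ?thesis by (simp add: of_rat_divide of_rat_add of_rat_of_nat_eq)
qed

lemma alg_B: "real_of_rat (1 / of_nat (Suc n)) * (real (Suc n) * u ^ n * L + u ^ Suc n * (- w / D) + (w * u ^ Suc n / D)) = (u::real) ^ n * L"
proof -
  have "u ^ Suc n * (- w / D) + (w * u ^ Suc n / D) = 0"
    by simp
  then show ?thesis by (simp add: of_rat_divide of_rat_add of_rat_of_nat_eq)
qed

lemma rinv: "real_of_rat (1 / of_nat (Suc n)) * (real (Suc n) * x) = (x::real)"
  by (simp add: of_rat_divide of_rat_add of_rat_of_nat_eq)

locale gen =
  fixes k :: nat and U W Z :: "pt4 \<Rightarrow> real"
  assumes k4: "k < 4"
    and SFU: "SF U" and SFW: "SF W" and SFZ: "SF Z"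
    and indW: "indep k W" and indZ: "indep k Z"
    and Ush: "\<And>t p. U (setc k t p) = U p + (t - coord k p)"
    and Zc: "\<And>p. coord k p = U p + Z p"
    and nz: "\<And>p. p \<in> setV \<Longrightarrow> U p \<noteq> 0 \<and> W p \<noteq> 0"
    and HL: "HC (\<lambda>p. ln ((U p)\<^sup>2 + (W p)\<^sup>2))"
    and HA: "HC (\<lambda>p. arctan (U p / W p))"
    and HB: "HC (\<lambda>p. arctan (W p / U p))"
begin

lemma Wsh: "W (setc k t p) = W p" using indW unfolding indep_def by blast

lemma Dnz: "p \<in> setV \<Longrightarrow> (U p)\<^sup>2 + (W p)\<^sup>2 \<noteq> 0"
  using nz pos2 by blast

lemma D_gen: assumes "\<And>u w t0. u \<noteq> 0 \<Longrightarrow> w \<noteq> 0 \<Longrightarrow> ((\<lambda>t. g (u + (t - t0)) w) has_real_derivative g' u w) (at t0)"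
  shows "Dk k (\<lambda>p. g (U p) (W p)) (\<lambda>p. g' (U p) (W p))"
  unfolding Dk_def
proof
  fix p assume p: "p \<in> setV"
  show "((\<lambda>t. g (U (setc k t p)) (W (setc k t p))) has_real_derivative g' (U p) (W p)) (at (coord k p))"
    unfolding Ush Wsh using assms nz[OF p] by blast
qed

lemma DU: "Dk k (\<lambda>p. U p ^ Suc n) (\<lambda>p. real (Suc n) * U p ^ n)"
  using D_gen[of "\<lambda>u w. u ^ Suc n" "\<lambda>u w. real (Suc n) * u ^ n"] d_P by blast
lemma DA: "Dk k (\<lambda>p. arctan (U p / W p)) (\<lambda>p. W p / ((U p)\<^sup>2 + (W p)\<^sup>2))"
  using D_gen[of "\<lambda>u w. arctan (u / w)" "\<lambda>u w. w / (u\<^sup>2 + w\<^sup>2)"] d_A1 by blast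
lemma DB: "Dk k (\<lambda>p. arctan (W p / U p)) (\<lambda>p. - W p / ((U p)\<^sup>2 + (W p)\<^sup>2))"
  using D_gen[of "\<lambda>u w. arctan (w / u)" "\<lambda>u w. - w / (u\<^sup>2 + w\<^sup>2)"] d_A2 by blast
lemma DL: "Dk k (\<lambda>p. ln ((U p)\<^sup>2 + (W p)\<^sup>2)) (\<lambda>p. 2 * U p / ((U p)\<^sup>2 + (W p)\<^sup>2))"
  using D_gen[of "\<lambda>u w. ln (u\<^sup>2 + w\<^sup>2)" "\<lambda>u w. 2*u / (u\<^sup>2 + w\<^sup>2)"] d_L by blast

lemma IUpow: "Ig k (\<lambda>p. U p ^ n)"
proof -
  let ?c = "real_of_rat (1 / of_nat (Suc n))"
  have H: "HC (\<lambda>p. ?c * U p ^ Suc n)" by (rule HC_SF, rule SF_mult[OF SF_const SF_pow[OF SFU]])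
  have "Dk k (\<lambda>p. ?c * U p ^ Suc n) (\<lambda>p. 0 * U p ^ Suc n + ?c * (real (Suc n) * U p ^ n))"
    by (rule Dk_mult[OF Dk_indep[OF indep_const] DU])
  then have "Dk k (\<lambda>p. ?c * U p ^ Suc n) (\<lambda>p. U p ^ n)"
    by (rule Dk_cong) (simp only: mult_zero_left add_0_left rinv)
  then show ?thesis using Ig_of_Dk[OF H] by blast
qed

lemma ST: "Ig k (\<lambda>p. W p * U p ^ m / ((U p)\<^sup>2 + (W p)\<^sup>2)) \<and> Ig k (\<lambda>p. U p ^ Suc m / ((U p)\<^sup>2 + (W p)\<^sup>2))"
proof (induction m)
  case 0
  have 1: "Ig k (\<lambda>p. W p * U p ^ 0 / ((U p)\<^sup>2 + (W p)\<^sup>2))"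
    by (rule Ig_cong[OF Ig_of_Dk[OF HA DA]]) simp
  let ?c = "real_of_rat (1/2)"
  have H: "HC (\<lambda>p. ?c * ln ((U p)\<^sup>2 + (W p)\<^sup>2))" by (rule HC_mult[OF SF_const HL])
  have "Dk k (\<lambda>p. ?c * ln ((U p)\<^sup>2 + (W p)\<^sup>2)) (\<lambda>p. 0 * ln ((U p)\<^sup>2 + (W p)\<^sup>2) + ?c * (2 * U p / ((U p)\<^sup>2 + (W p)\<^sup>2)))"
    by (rule Dk_mult[OF Dk_indep[OF indep_const] DL])
  then have 2: "Ig k (\<lambda>p. U p ^ Suc 0 / ((U p)\<^sup>2 + (W p)\<^sup>2))"
    by (intro Ig_of_Dk[OF H], rule Dk_cong) (simp_all add: of_rat_divide)
  show ?case using 1 2 by blast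
next
  case (Suc m)
  have S: "Ig k (\<lambda>p. W p * U p ^ Suc m / ((U p)\<^sup>2 + (W p)\<^sup>2))"
    by (rule Ig_cong[OF Ig_mult[OF SFW indW conjunct2[OF Suc.IH]]]) simp
  have T: "Ig k (\<lambda>p. U p ^ Suc (Suc m) / ((U p)\<^sup>2 + (W p)\<^sup>2))"
    by (rule Ig_cong[OF Ig_add[OF IUpow Ig_mult[OF SF_neg[OF SFW] indep_neg[OF indW] conjunct1[OF Suc.IH]]]])
      (rule alg_T[OF Dnz])
  show ?case using S T by blast
qed

lemma IL: "Ig k (\<lambda>p. U p ^ n * ln ((U p)\<^sup>2 + (W p)\<^sup>2))"
proof -
  have H: "HC (\<lambda>p. U p ^ Suc n * ln ((U p)\<^sup>2 + (W p)\<^sup>2))" by (rule HC_mult[OF SF_pow[OF SFU] HL])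
  have I0: "Ig k (\<lambda>p. real (Suc n) * U p ^ n * ln ((U p)\<^sup>2 + (W p)\<^sup>2) + U p ^ Suc n * (2 * U p / ((U p)\<^sup>2 + (W p)\<^sup>2)))"
    by (rule Ig_of_Dk[OF H Dk_mult[OF DU DL]])
  have I1: "Ig k (\<lambda>p. real_of_rat (-2) * (U p ^ Suc (Suc n) / ((U p)\<^sup>2 + (W p)\<^sup>2)))"
    by (rule Ig_const[OF conjunct2[OF ST]])
  show ?thesis
    by (rule Ig_cong[OF Ig_const[OF Ig_add[OF I0 I1], of "1 / of_nat (Suc n)"]]) (rule alg_L)
qed

lemma IA: "Ig k (\<lambda>p. U p ^ n * arctan (U p / W p))"
proof -
  have H: "HC (\<lambda>p. U p ^ Suc n * arctan (U p / W p))" by (rule HC_mult[OF SF_pow[OF SFU] HA])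
  have I0: "Ig k (\<lambda>p. real (Suc n) * U p ^ n * arctan (U p / W p) + U p ^ Suc n * (W p / ((U p)\<^sup>2 + (W p)\<^sup>2)))"
    by (rule Ig_of_Dk[OF H Dk_mult[OF DU DA]])
  have I1: "Ig k (\<lambda>p. real_of_rat (-1) * (W p * U p ^ Suc n / ((U p)\<^sup>2 + (W p)\<^sup>2)))"
    by (rule Ig_const[OF conjunct1[OF ST]])
  show ?thesis
    by (rule Ig_cong[OF Ig_const[OF Ig_add[OF I0 I1], of "1 / of_nat (Suc n)"]]) (rule alg_A)
qed

lemma IB: "Ig k (\<lambda>p. U p ^ n * arctan (W p / U p))"
proof -
  have H: "HC (\<lambda>p. U p ^ Suc n * arctan (W p / U p))" by (rule HC_mult[OF SF_pow[OF SFU] HB])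
  have I0: "Ig k (\<lambda>p. real (Suc n) * U p ^ n * arctan (W p / U p) + U p ^ Suc n * (- W p / ((U p)\<^sup>2 + (W p)\<^sup>2)))"
    by (rule Ig_of_Dk[OF H Dk_mult[OF DU DB]])
  have I1: "Ig k (\<lambda>p. (W p * U p ^ Suc n / ((U p)\<^sup>2 + (W p)\<^sup>2)))"
    by (rule conjunct1[OF ST])
  show ?thesis
    by (rule Ig_cong[OF Ig_const[OF Ig_add[OF I0 I1], of "1 / of_nat (Suc n)"]]) (rule alg_B)
qed

lemma Imon: assumes "\<And>i. Ig k (\<lambda>p. U p ^ i * F p)" shows "Ig k (\<lambda>p. mon4 m p * F p)"
proof -
  obtain j h where h: "SF h" "indep k h" "\<And>p. mon4 m p = coord k p ^ j * h p"
    using mono_split[OF k4, of m] by blast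
  have eq: "mon4 m p * F p = (\<Sum>i\<in>{..j}. (real (j choose i) * Z p ^ (j - i) * h p) * (U p ^ i * F p))" for p
    unfolding h(3) Zc binomial_ring sum_distrib_right by (rule sum.cong) (simp_all add: mult_ac)
  have "Ig k (\<lambda>p. \<Sum>i\<in>{..j}. (real (j choose i) * Z p ^ (j - i) * h p) * (U p ^ i * F p))"
    by (rule Ig_sum) (auto intro!: Ig_mult assms SF_mult SF_ofnat SF_pow SFZ h indep_mult indep_const indep_pow indZ)
  then show ?thesis by (rule Ig_cong) (simp add: eq)
qed

lemma final:
  "Ig k (\<lambda>p. mon4 m p * ln ((U p)\<^sup>2 + (W p)\<^sup>2))"
  "Ig k (\<lambda>p. mon4 m p * arctan (U p / W p))"
  "Ig k (\<lambda>p. mon4 m p * arctan (W p / U p))"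
  "Ig k (\<lambda>p. mon4 m p)"
proof -
  have "Ig k (\<lambda>p. U p ^ i * 1)" for i using IUpow by simp
  then show "Ig k (\<lambda>p. mon4 m p * ln ((U p)\<^sup>2 + (W p)\<^sup>2))"
    "Ig k (\<lambda>p. mon4 m p * arctan (U p / W p))"
    "Ig k (\<lambda>p. mon4 m p * arctan (W p / U p))"
    "Ig k (\<lambda>p. mon4 m p)"
    using Imon[OF IL] Imon[OF IA] Imon[OF IB] Imon[of "\<lambda>p. 1"] by simp_all
qed

end

lemma SF_bigX: "SF bigX"
proof -
  have "bigX = (\<lambda>p. coord 0 p - coord 2 p)" by (rule ext) (simp add: bigX_coord)
  then show ?thesis using SF_diff[OF SF_coord[of 0] SF_coord[of 2]] by simp
qed
lemma SF_bigY: "SF bigY"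
proof -
  have "bigY = (\<lambda>p. coord 1 p - coord 3 p)" by (rule ext) (simp add: bigY_coord)
  then show ?thesis using SF_diff[OF SF_coord[of 1] SF_coord[of 3]] by simp
qed

lemma V_nz: "p \<in> setV \<Longrightarrow> bigX p \<noteq> 0 \<and> bigY p \<noteq> 0" by (simp add: setV_def)

lemma k0: "Ig 0 (\<lambda>p. mon4 m p * LL p) \<and> Ig 0 (\<lambda>p. mon4 m p * A1 p) \<and> Ig 0 (\<lambda>p. mon4 m p * A2 p) \<and> Ig 0 (mon4 m)"
proof -
  interpret gen 0 bigX bigY "coord 2"
  proof
    show "indep 0 bigY" by (simp add: indep_def bigY_coord coord_setc)
    show "indep 0 (coord 2)" by (simp add: indep_coord)
    show "bigX (setc 0 t p) = bigX p + (t - coord 0 p)" for t p by (simp add: bigX_coord coord_setc)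
    show "coord 0 p = bigX p + coord 2 p" for p by (simp add: bigX_coord)
    show "HC (\<lambda>p. ln ((bigX p)\<^sup>2 + (bigY p)\<^sup>2))" using HC_LL unfolding LL_def[abs_def] .
    show "HC (\<lambda>p. arctan (bigX p / bigY p))" using HC_A1 unfolding A1_def[abs_def] .
    show "HC (\<lambda>p. arctan (bigY p / bigX p))" using HC_A2 unfolding A2_def[abs_def] .
  qed (auto simp: SF_bigX SF_bigY SF_coord V_nz)
  show ?thesis using final[of m] by (simp add: LL_def[abs_def] A1_def[abs_def] A2_def[abs_def])
qed

lemma k1: "Ig 1 (\<lambda>p. mon4 m p * LL p) \<and> Ig 1 (\<lambda>p. mon4 m p * A1 p) \<and> Ig 1 (\<lambda>p. mon4 m p * A2 p) \<and> Ig 1 (mon4 m)"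
proof -
  have L: "(\<lambda>p. ln ((bigY p)\<^sup>2 + (bigX p)\<^sup>2)) = LL" by (rule ext) (simp add: LL_def add.commute)
  interpret gen 1 bigY bigX "coord 3"
  proof
    show "indep 1 bigX" by (simp add: indep_def bigX_coord coord_setc)
    show "indep 1 (coord 3)" by (simp add: indep_coord)
    show "bigY (setc 1 t p) = bigY p + (t - coord 1 p)" for t p by (simp add: bigY_coord coord_setc)
    show "coord 1 p = bigY p + coord 3 p" for p by (simp add: bigY_coord)
    show "HC (\<lambda>p. ln ((bigY p)\<^sup>2 + (bigX p)\<^sup>2))" using HC_LL unfolding L .
    show "HC (\<lambda>p. arctan (bigY p / bigX p))" using HC_A2 unfolding A2_def[abs_def] .
    show "HC (\<lambda>p. arctan (bigX p / bigY p))" using HC_A1 unfolding A1_def[abs_def] .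
  qed (auto simp: SF_bigX SF_bigY SF_coord V_nz)
  have "Ig 1 (\<lambda>p. mon4 m p * LL p)" by (rule Ig_cong[OF final(1)[of m]]) (simp add: LL_def A1_def A2_def arctan_minus add.commute)
  moreover have "Ig 1 (\<lambda>p. mon4 m p * A1 p)" by (rule Ig_cong[OF final(3)[of m]]) (simp add: LL_def A1_def A2_def arctan_minus add.commute)
  moreover have "Ig 1 (\<lambda>p. mon4 m p * A2 p)" by (rule Ig_cong[OF final(2)[of m]]) (simp add: LL_def A1_def A2_def arctan_minus add.commute)
  ultimately show ?thesis using final(4)[of m] by simp
qed

lemma k2: "Ig 2 (\<lambda>p. mon4 m p * LL p) \<and> Ig 2 (\<lambda>p. mon4 m p * A1 p) \<and> Ig 2 (\<lambda>p. mon4 m p * A2 p) \<and> Ig 2 (mon4 m)"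
proof -
  have L: "(\<lambda>p. ln ((- bigX p)\<^sup>2 + (bigY p)\<^sup>2)) = LL" by (rule ext) (simp add: LL_def)
  have a: "(\<lambda>p. arctan (- bigX p / bigY p)) = (\<lambda>p. - A1 p)" by (rule ext) (simp add: A1_def arctan_minus)
  have b: "(\<lambda>p. arctan (bigY p / - bigX p)) = (\<lambda>p. - A2 p)" by (rule ext) (simp add: A2_def arctan_minus)
  interpret gen 2 "\<lambda>p. - bigX p" bigY "coord 0"
  proof
    show "indep 2 bigY" by (simp add: indep_def bigY_coord coord_setc)
    show "indep 2 (coord 0)" by (simp add: indep_coord)
    show "- bigX (setc 2 t p) = - bigX p + (t - coord 2 p)" for t p by (simp add: bigX_coord coord_setc)
    show "coord 2 p = - bigX p + coord 0 p" for p by (simp add: bigX_coord)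
    show "HC (\<lambda>p. ln ((- bigX p)\<^sup>2 + (bigY p)\<^sup>2))" using HC_LL unfolding L .
    show "HC (\<lambda>p. arctan (- bigX p / bigY p))" using HC_neg[OF HC_A1] unfolding a .
    show "HC (\<lambda>p. arctan (bigY p / - bigX p))" using HC_neg[OF HC_A2] unfolding b .
    show "SF (\<lambda>p. - bigX p)" using SF_neg[OF SF_bigX] .
  qed (auto simp: SF_bigX SF_bigY SF_coord V_nz)
  have "Ig 2 (\<lambda>p. mon4 m p * LL p)" by (rule Ig_cong[OF final(1)[of m]]) (simp add: LL_def A1_def A2_def arctan_minus add.commute)
  moreover have "Ig 2 (\<lambda>p. mon4 m p * A1 p)" by (rule Ig_cong[OF Ig_neg[OF final(2)[of m]]]) (simp add: LL_def A1_def A2_def arctan_minus add.commute)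
  moreover have "Ig 2 (\<lambda>p. mon4 m p * A2 p)" by (rule Ig_cong[OF Ig_neg[OF final(3)[of m]]]) (simp add: LL_def A1_def A2_def arctan_minus add.commute)
  ultimately show ?thesis using final(4)[of m] by simp
qed

lemma k3: "Ig 3 (\<lambda>p. mon4 m p * LL p) \<and> Ig 3 (\<lambda>p. mon4 m p * A1 p) \<and> Ig 3 (\<lambda>p. mon4 m p * A2 p) \<and> Ig 3 (mon4 m)"
proof -
  have L: "(\<lambda>p. ln ((- bigY p)\<^sup>2 + (bigX p)\<^sup>2)) = LL" by (rule ext) (simp add: LL_def add.commute)
  have a: "(\<lambda>p. arctan (- bigY p / bigX p)) = (\<lambda>p. - A2 p)" by (rule ext) (simp add: A2_def arctan_minus)
  have b: "(\<lambda>p. arctan (bigX p / - bigY p)) = (\<lambda>p. - A1 p)" by (rule ext) (simp add: A1_def arctan_minus)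
  interpret gen 3 "\<lambda>p. - bigY p" bigX "coord 1"
  proof
    show "indep 3 bigX" by (simp add: indep_def bigX_coord coord_setc)
    show "indep 3 (coord 1)" by (simp add: indep_coord)
    show "- bigY (setc 3 t p) = - bigY p + (t - coord 3 p)" for t p by (simp add: bigY_coord coord_setc)
    show "coord 3 p = - bigY p + coord 1 p" for p by (simp add: bigY_coord)
    show "HC (\<lambda>p. ln ((- bigY p)\<^sup>2 + (bigX p)\<^sup>2))" using HC_LL unfolding L .
    show "HC (\<lambda>p. arctan (- bigY p / bigX p))" using HC_neg[OF HC_A2] unfolding a .
    show "HC (\<lambda>p. arctan (bigX p / - bigY p))" using HC_neg[OF HC_A1] unfolding b .
    show "SF (\<lambda>p. - bigY p)" using SF_neg[OF SF_bigY] .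
  qed (auto simp: SF_bigX SF_bigY SF_coord V_nz)
  have "Ig 3 (\<lambda>p. mon4 m p * LL p)" by (rule Ig_cong[OF final(1)[of m]]) (simp add: LL_def A1_def A2_def arctan_minus add.commute)
  moreover have "Ig 3 (\<lambda>p. mon4 m p * A1 p)" by (rule Ig_cong[OF Ig_neg[OF final(3)[of m]]]) (simp add: LL_def A1_def A2_def arctan_minus add.commute)
  moreover have "Ig 3 (\<lambda>p. mon4 m p * A2 p)" by (rule Ig_cong[OF Ig_neg[OF final(2)[of m]]]) (simp add: LL_def A1_def A2_def arctan_minus add.commute)
  ultimately show ?thesis using final(4)[of m] by simp
qed

lemma allk: "k < 4 \<Longrightarrow> Ig k (\<lambda>p. mon4 m p * LL p) \<and> Ig k (\<lambda>p. mon4 m p * A1 p) \<and> Ig k (\<lambda>p. mon4 m p * A2 p) \<and> Ig k (mon4 m)"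
proof -
  assume "k < 4"
  then have "k = 0 \<or> k = 1 \<or> k = 2 \<or> k = 3" by auto
  then show ?thesis using k0 k1 k2 k3 by (elim disjE) simp_all
qed

lemma Ig_peval: assumes "is_qpoly4 P" "\<And>m. Ig k (\<lambda>p. mon4 m p * F p)"
  shows "Ig k (\<lambda>p. peval4 P p * F p)"
proof -
  have "Ig k (\<lambda>p. \<Sum>m\<in>{m. P m \<noteq> 0}. real_of_rat (P m) * (mon4 m p * F p))"
    using assms(1) unfolding is_qpoly4_def by (intro Ig_sum Ig_const assms(2))
  then show ?thesis by (rule Ig_cong) (simp add: peval4_mono sum_distrib_right mult.assoc)
qed

theorem mainTheorem7:
  fixes P1 P2 P3 P4 :: qpoly4 and k :: nat
  assumes "is_qpoly4 P1" "is_qpoly4 P2" "is_qpoly4 P3" "is_qpoly4 P4"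
    and "k < 4"
  shows "\<exists>Q1 Q2 Q3 Q4. is_qpoly4 Q1 \<and> is_qpoly4 Q2 \<and> is_qpoly4 Q3 \<and> is_qpoly4 Q4 \<and>
     (\<forall>p\<in>setV. ((\<lambda>t. Hfun Q1 Q2 Q3 Q4 (setc k t p)) has_real_derivative
                    Hfun P1 P2 P3 P4 p) (at (coord k p)))"
proof -
  note K = allk[OF assms(5)]
  have i1: "Ig k (\<lambda>p. peval4 P1 p * LL p)" by (rule Ig_peval[OF assms(1)]) (use K in blast)
  have i2: "Ig k (\<lambda>p. peval4 P2 p * A1 p)" by (rule Ig_peval[OF assms(2)]) (use K in blast)
  have i3: "Ig k (\<lambda>p. peval4 P3 p * A2 p)" by (rule Ig_peval[OF assms(3)]) (use K in blast)
  have i4: "Ig k (\<lambda>p. peval4 P4 p * 1)" by (rule Ig_peval[OF assms(4)]) (use K in simp)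
  have "Ig k (Hfun P1 P2 P3 P4)"
    using Ig_add[OF Ig_add[OF Ig_add[OF i1 i2] i3] i4]
    by (rule Ig_cong) (simp add: Hfun_def LL_def A1_def A2_def)
  then obtain G where G: "HC G" "Dk k G (Hfun P1 P2 P3 P4)" unfolding Ig_def by blast
  obtain a b c d where abcd: "SF a" "SF b" "SF c" "SF d" "G = (\<lambda>p. a p * LL p + b p * A1 p + c p * A2 p + d p)"
    using G(1) unfolding HC_def by blast
  obtain Q1 where Q1: "is_qpoly4 Q1" "peval4 Q1 = a" using SF_to_peval[OF abcd(1)] by blast
  obtain Q2 where Q2: "is_qpoly4 Q2" "peval4 Q2 = b" using SF_to_peval[OF abcd(2)] by blast
  obtain Q3 where Q3: "is_qpoly4 Q3" "peval4 Q3 = c" using SF_to_peval[OF abcd(3)] by blast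
  obtain Q4 where Q4: "is_qpoly4 Q4" "peval4 Q4 = d" using SF_to_peval[OF abcd(4)] by blast
  have HG: "Hfun Q1 Q2 Q3 Q4 = G"
    by (rule ext) (simp add: abcd(5) Hfun_def Q1 Q2 Q3 Q4 LL_def A1_def A2_def)
  have D: "\<forall>p\<in>setV. ((\<lambda>t. Hfun Q1 Q2 Q3 Q4 (setc k t p)) has_real_derivative Hfun P1 P2 P3 P4 p) (at (coord k p))"
    using G(2) unfolding HG Dk_def .
  show ?thesis
    by (rule exI[of _ Q1], rule exI[of _ Q2], rule exI[of _ Q3], rule exI[of _ Q4]) (simp add: Q1(1) Q2(1) Q3(1) Q4(1) D)
qed

end
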